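(* In a RiFle assignment game, if $p_i$ is matched to $q_j$ in a stable outcome $(\bar u,\bar v;\mu)$, then $u_i+v_j=\alpha_{ij}$ (where $\alpha_{ij}=\beta_{ij}+\gamma_{ij}$).
   Context: A RiFle assignment game consists of two disjoint sets of agents $P=\{p_1,\dots,p_n\}$ and $Q=\{q_1,\dots,q_n\}$, a pair of nonnegative real numbers $(\beta_{ij},\gamma_{ij})$ for every pair $(p_i,q_j)\in P\times Q$ (write $\alpha_{ij}=\beta_{ij}+\gamma_{ij}$), and a designation of every agent as rigid or flexible. Let $\mathcal R$ be the set of pairs with at least one rigid agent and $\mathcal F$ the set of pairs with both agents flexible. An outcome $(\bar u,\bar v;\mu)$ consists of a matching $\mu$ between $P$ and $Q$ (write $p_i\stackrel{\mu}{\longleftrightarrow} q_j$) and payoff vectors $\bar u,\bar v\in\mathbb R^n$. It is feasible if: (1) $u_i\ge0$, $v_j\ge0$; (2) if a rigid $p_i$ is matched to $q_j$ then $u_i=\beta_{ij}$ and, if $q_j$ is flexible, $v_j\ge\gamma_{ij}$; symmetrically for a rigid $q_j$ matched to $p_i$: $v_j=\gamma_{ij}$ and, if $p_i$ is flexible, $u_i\ge\beta_{ij}$; (3) $\sum_iu_i+\sum_jv_j=\sum_{p_i\stackrel{\mu}{\longleftrightarrow}q_j}\alpha_{ij}$. It is stable if feasible and $u_i+v_j\ge\alpha_{ij}$ for $(p_i,q_j)\in\mathcal F$ and ($u_i\ge\beta_{ij}$ or $v_j\ge\gamma_{ij}$) for $(p_i,q_j)\in\mathcal R$. *)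

theory Defs
  imports Complex_Main
begin

text \<open>A RiFle assignment game with agents P = {p_0..p_(n-1)}, Q = {q_0..q_(n-1)}
 (indexed by i < n), payoff parameters beta i j, gamma i j, and rigidity flags
 rigP i (p_i rigid), rigQ j (q_j rigid). A matching is a bijection mu of {..<n};
 p_i is matched to q_(mu i).\<close>

definition rifle_game :: "nat \<Rightarrow> (nat \<Rightarrow> nat \<Rightarrow> real) \<Rightarrow> (nat \<Rightarrow> nat \<Rightarrow> real) \<Rightarrow> bool" where
  "rifle_game n \<beta> \<gamma> \<longleftrightarrow> (\<forall>i<n. \<forall>j<n. \<beta> i j \<ge> 0 \<and> \<gamma> i j \<ge> 0)"

definition alpha :: "(nat \<Rightarrow> nat \<Rightarrow> real) \<Rightarrow> (nat \<Rightarrow> nat \<Rightarrow> real) \<Rightarrow> nat \<Rightarrow> nat \<Rightarrow> real" where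
  "alpha \<beta> \<gamma> i j = \<beta> i j + \<gamma> i j"

definition feasible ::
  "nat \<Rightarrow> (nat \<Rightarrow> nat \<Rightarrow> real) \<Rightarrow> (nat \<Rightarrow> nat \<Rightarrow> real) \<Rightarrow> (nat \<Rightarrow> bool) \<Rightarrow> (nat \<Rightarrow> bool)
   \<Rightarrow> (nat \<Rightarrow> real) \<Rightarrow> (nat \<Rightarrow> real) \<Rightarrow> (nat \<Rightarrow> nat) \<Rightarrow> bool" where
  "feasible n \<beta> \<gamma> rigP rigQ u v \<mu> \<longleftrightarrow>
     bij_betw \<mu> {..<n} {..<n} \<and>
     (\<forall>i<n. u i \<ge> 0) \<and> (\<forall>j<n. v j \<ge> 0) \<and>
     (\<forall>i<n. rigP i \<longrightarrow> u i = \<beta> i (\<mu> i) \<and> (\<not> rigQ (\<mu> i) \<longrightarrow> v (\<mu> i) \<ge> \<gamma> i (\<mu> i))) \<and>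
     (\<forall>i<n. rigQ (\<mu> i) \<longrightarrow> v (\<mu> i) = \<gamma> i (\<mu> i) \<and> (\<not> rigP i \<longrightarrow> u i \<ge> \<beta> i (\<mu> i))) \<and>
     (\<Sum>i<n. u i) + (\<Sum>j<n. v j) = (\<Sum>i<n. alpha \<beta> \<gamma> i (\<mu> i))"

definition stable ::
  "nat \<Rightarrow> (nat \<Rightarrow> nat \<Rightarrow> real) \<Rightarrow> (nat \<Rightarrow> nat \<Rightarrow> real) \<Rightarrow> (nat \<Rightarrow> bool) \<Rightarrow> (nat \<Rightarrow> bool)
   \<Rightarrow> (nat \<Rightarrow> real) \<Rightarrow> (nat \<Rightarrow> real) \<Rightarrow> (nat \<Rightarrow> nat) \<Rightarrow> bool" where
  "stable n \<beta> \<gamma> rigP rigQ u v \<mu> \<longleftrightarrow>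
     feasible n \<beta> \<gamma> rigP rigQ u v \<mu> \<and>
     (\<forall>i<n. \<forall>j<n. \<not> rigP i \<and> \<not> rigQ j \<longrightarrow> u i + v j \<ge> alpha \<beta> \<gamma> i j) \<and>
     (\<forall>i<n. \<forall>j<n. rigP i \<or> rigQ j \<longrightarrow> u i \<ge> \<beta> i j \<or> v j \<ge> \<gamma> i j)"

end

theory Submission
  imports Defs
begin

theorem proposition1:
  fixes n :: nat and \<beta> \<gamma> :: "nat \<Rightarrow> nat \<Rightarrow> real"
    and rigP rigQ :: "nat \<Rightarrow> bool" and u v :: "nat \<Rightarrow> real" and \<mu> :: "nat \<Rightarrow> nat"
    and i j :: nat
  assumes "rifle_game n \<beta> \<gamma>"
    and "stable n \<beta> \<gamma> rigP rigQ u v \<mu>"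
    and "i < n" and "\<mu> i = j"
  shows "u i + v j = alpha \<beta> \<gamma> i j"
proof -
  have F: "feasible n \<beta> \<gamma> rigP rigQ u v \<mu>" using assms(2) unfolding stable_def by (elim conjE)
  note Fd = F[unfolded feasible_def]
  have R1: "\<forall>i<n. rigP i \<longrightarrow> u i = \<beta> i (\<mu> i) \<and> (\<not> rigQ (\<mu> i) \<longrightarrow> v (\<mu> i) \<ge> \<gamma> i (\<mu> i))"
    using Fd by (elim conjE)
  have R2: "\<forall>i<n. rigQ (\<mu> i) \<longrightarrow> v (\<mu> i) = \<gamma> i (\<mu> i) \<and> (\<not> rigP i \<longrightarrow> u i \<ge> \<beta> i (\<mu> i))"
    using Fd by (elim conjE)
  have St: "\<forall>i<n. \<forall>j<n. \<not> rigP i \<and> \<not> rigQ j \<longrightarrow> u i + v j \<ge> alpha \<beta> \<gamma> i j"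
    using assms(2) unfolding stable_def by (elim conjE)
  have S: "(\<Sum>i<n. u i) + (\<Sum>j<n. v j) = (\<Sum>i<n. alpha \<beta> \<gamma> i (\<mu> i))"
    using Fd by (elim conjE)
  have bij: "bij_betw \<mu> {..<n} {..<n}" using Fd by (elim conjE)
  have ge: "u k + v (\<mu> k) \<ge> alpha \<beta> \<gamma> k (\<mu> k)" if k: "k < n" for k
  proof -
    have mk: "\<mu> k < n" using bij k by (meson bij_betwE lessThan_iff)
    show ?thesis
    proof (cases "rigP k")
      case True
      have "u k = \<beta> k (\<mu> k)" "\<not> rigQ (\<mu> k) \<longrightarrow> v (\<mu> k) \<ge> \<gamma> k (\<mu> k)"
        "rigQ (\<mu> k) \<longrightarrow> v (\<mu> k) = \<gamma> k (\<mu> k)"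
        using R1 R2 k True by simp_all
      then show ?thesis unfolding alpha_def by (cases "rigQ (\<mu> k)") auto
    next
      case nP: False
      show ?thesis
      proof (cases "rigQ (\<mu> k)")
        case True
        have "v (\<mu> k) = \<gamma> k (\<mu> k)" "u k \<ge> \<beta> k (\<mu> k)"
          using R2 k nP True by simp_all
        then show ?thesis unfolding alpha_def by simp
      next
        case False
        then show ?thesis using St k mk nP False by simp
      qed
    qed
  qed
  have V: "(\<Sum>k<n. v (\<mu> k)) = (\<Sum>j<n. v j)"
    by (rule sum.reindex_bij_betw[OF bij])
  define f where "f k = u k + v (\<mu> k) - alpha \<beta> \<gamma> k (\<mu> k)" for k
  have "(\<Sum>k<n. f k) = (\<Sum>k<n. u k) + (\<Sum>k<n. v (\<mu> k)) - (\<Sum>k<n. alpha \<beta> \<gamma> k (\<mu> k))"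
    unfolding f_def by (simp only: sum.distrib sum_subtractf)
  hence f0: "(\<Sum>k<n. f k) = 0" using S V by linarith
  have fnn: "\<And>k. k \<in> {..<n} \<Longrightarrow> 0 \<le> f k" unfolding f_def using ge by simp
  have "f i = 0"
    using sum_nonneg_eq_0_iff[of "{..<n}" f] f0 fnn assms(3) by simp
  then show ?thesis using assms(4) unfolding f_def by simp
qed

end
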